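(* Let $R$ be a ring with identity and involution $*$. Consider the conditions: (1) $R$ is directly finite, i.e. for all $a,b\in R$, $ab=1$ implies $ba=1$; (2) for all $a,b\in R$, if $bab=b$, $(ab)^*=ab$ and $ba^2=a$, then $a$ is core invertible with $a^{\oplus}=b$; (3) for all $a,b\in R$, if $aba=a$, $(ab)^*=ab$ and $ba^2=a$, then $a$ is core invertible with $a^{\oplus}=bab$; (4) for all $a\in R$, if $a^*a=1$, then $aa^*=1$. Then (1) $\Rightarrow$ (2) $\Rightarrow$ (3) $\Rightarrow$ (4).
   Context: An involution on $R$ satisfies $(a^* )^*=a$, $(ab)^*=b^*a^*$, $(a+b)^*=a^*+b^*$. An element $x\in R$ is a core inverse of $a$ if $axa=a$, $xR=aR$ and $Rx=Ra^*$; it is unique when it exists and is denoted $a^{\oplus}$. *)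

theory Defs
  imports Main
begin

definition is_involution :: "('a::ring_1 \<Rightarrow> 'a) \<Rightarrow> bool" where
  "is_involution s \<longleftrightarrow> (\<forall>a. s (s a) = a) \<and> (\<forall>a b. s (a * b) = s b * s a)
     \<and> (\<forall>a b. s (a + b) = s a + s b)"

definition core_inverse :: "('a::ring_1 \<Rightarrow> 'a) \<Rightarrow> 'a \<Rightarrow> 'a \<Rightarrow> bool" where
  "core_inverse s a x \<longleftrightarrow> a * x * a = a
     \<and> {x * r | r. True} = {a * r | r. True}
     \<and> {r * x | r. True} = {r * s a | r. True}"

definition directly_finite :: "'a::ring_1 itself \<Rightarrow> bool" where
  "directly_finite _ \<longleftrightarrow> (\<forall>a b::'a. a * b = 1 \<longrightarrow> b * a = 1)"

end

theory Submission
  imports Defs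
begin

lemma rset_eq:
  fixes a x :: "'a::ring_1"
  assumes "x = a * u" "a = x * v"
  shows "{x * r | r. True} = {a * r | r. True}"
proof -
  have "\<And>r. x * r = a * (u * r)" by (simp only: assms(1) mult.assoc)
  moreover have "\<And>r. a * r = x * (v * r)" by (simp only: assms(2) mult.assoc)
  ultimately show ?thesis by blast
qed

lemma lset_eq:
  fixes a x :: "'a::ring_1"
  assumes "x = u * a" "a = v * x"
  shows "{r * x | r. True} = {r * a | r. True}"
proof -
  have "\<And>r. r * x = (r * u) * a" by (simp only: assms(1) mult.assoc)
  moreover have "\<And>r. r * a = (r * v) * x" by (simp only: assms(2) mult.assoc)
  ultimately show ?thesis by blast
qed

lemma step1:
  fixes a b :: "'a::ring_1"
  assumes df: "directly_finite TYPE('a)" and inv: "is_involution s"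
    and h1: "b * a * b = b" and h2: "s (a * b) = a * b" and h3: "b * a ^ 2 = a"
  shows "core_inverse s a b"
proof -
  have h3': "b * a * a = a" using h3 by (simp add: power2_eq_square mult.assoc)
  have h1': "b * (a * b) = b" using h1 by (simp add: mult.assoc)
  have h3'': "b * (a * a) = a" using h3' by (simp add: mult.assoc)
  define X where "X = a + (1 - a * b)"
  define Y where "Y = b + (1 - b * a)"
  have t1: "b * (1 - a * b) = 0" using h1' by (simp add: right_diff_distrib)
  have t2: "(1 - b * a) * a = 0" using h3' by (simp add: left_diff_distrib)
  have t3: "(1 - b * a) * (1 - a * b) = 1 - a * b - b * a + b * a * a * b"
    by (simp add: left_diff_distrib right_diff_distrib mult.assoc)
  have "Y * X = b * a + b * (1 - a * b) + ((1 - b * a) * a + (1 - b * a) * (1 - a * b))"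
    unfolding X_def Y_def by (simp add: distrib_left distrib_right add.assoc)
  also have "... = 1" using t1 t2 t3 h3' by simp
  finally have "Y * X = 1" .
  hence XY: "X * Y = 1" using df unfolding directly_finite_def by blast
  have u1: "a * (1 - b * a) = a - a * b * a" by (simp add: right_diff_distrib mult.assoc)
  have u2: "(1 - a * b) * b = b - a * b * b" by (simp add: left_diff_distrib mult.assoc)
  have u3: "(1 - a * b) * (1 - b * a) = 1 - b * a - a * b + a * b * b * a"
    by (simp add: left_diff_distrib right_diff_distrib mult.assoc)
  have "X * Y = a * b + a * (1 - b * a) + ((1 - a * b) * b + (1 - a * b) * (1 - b * a))"
    unfolding X_def Y_def by (simp add: distrib_left distrib_right add.assoc)
  also have "... = 1 + (a - a * b * a + b - a * b * b - b * a + a * b * b * a)"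
    unfolding u1 u2 u3 by simp
  finally have E: "a - a * b * a + b - a * b * b - b * a + a * b * b * a = 0" using XY by simp
  have "(a - a * b * a + b - a * b * b - b * a + a * b * b * a) * (a * b) = b - a * b * b"
  proof -
    have "a * b * a * (a * b) = a * (b * a * a) * b" by (simp add: mult.assoc)
    also have "... = a * (a * b)" unfolding h3' by (simp add: mult.assoc)
    finally have e1: "a * b * a * (a * b) = a * (a * b)" .
    have e2: "b * (a * b) = b" by (rule h1')
    have e3: "a * b * b * (a * b) = a * b * b" using h1' by (simp add: mult.assoc)
    have e4: "b * a * (a * b) = a * b" using h3' by (simp add: mult.assoc[symmetric])
    have "a * b * b * a * (a * b) = a * b * (b * a * a) * b" by (simp add: mult.assoc)
    also have "... = a * b" unfolding h3' using h1' by (simp add: mult.assoc)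
    finally have e5: "a * b * b * a * (a * b) = a * b" .
    have "(a - a * b * a + b - a * b * b - b * a + a * b * b * a) * (a * b)
       = a * (a * b) - a * b * a * (a * b) + b * (a * b) - a * b * b * (a * b) - b * a * (a * b) + a * b * b * a * (a * b)"
      by (simp only: left_diff_distrib distrib_right)
    also have "... = b - a * b * b" unfolding e1 e2 e3 e4 e5 by simp
    finally show ?thesis .
  qed
  hence bab: "b = a * b * b" using E by simp
  have "b * a = a * b * b * a" using bab by simp
  hence aba: "a * b * a = a" using E bab by (metis add_diff_cancel diff_add_cancel eq_iff_diff_eq_0)
  have si: "\<And>x y. s (x * y) = s y * s x" using inv unfolding is_involution_def by blast
  have r1: "b = a * (b * b)" using bab by (simp add: mult.assoc)
  have r2: "a = b * (a * a)" using h3'' by simp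
  have l1: "b = (b * s b) * s a" using h1 h2 si by (metis mult.assoc)
  have l2: "s a = (s a * a) * b"
    using aba si h2 by (metis mult.assoc)
  show ?thesis unfolding core_inverse_def
    using aba rset_eq[OF r1 r2] lset_eq[OF l1 l2] by simp
qed

theorem theorem3p10:
  fixes s :: "'a::ring_1 \<Rightarrow> 'a"
  assumes "is_involution s"
  shows "(directly_finite TYPE('a) \<longrightarrow>
           (\<forall>a b::'a. b * a * b = b \<and> s (a * b) = a * b \<and> b * a ^ 2 = a \<longrightarrow> core_inverse s a b))
       \<and> ((\<forall>a b::'a. b * a * b = b \<and> s (a * b) = a * b \<and> b * a ^ 2 = a \<longrightarrow> core_inverse s a b) \<longrightarrow>
           (\<forall>a b::'a. a * b * a = a \<and> s (a * b) = a * b \<and> b * a ^ 2 = a \<longrightarrow> core_inverse s a (b * a * b)))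
       \<and> ((\<forall>a b::'a. a * b * a = a \<and> s (a * b) = a * b \<and> b * a ^ 2 = a \<longrightarrow> core_inverse s a (b * a * b)) \<longrightarrow>
           (\<forall>a::'a. s a * a = 1 \<longrightarrow> a * s a = 1))"
proof (intro conjI impI allI)
  have si: "\<And>x y. s (x * y) = s y * s x" and ss: "\<And>x. s (s x) = x"
    using assms unfolding is_involution_def by blast+
  show "core_inverse s a b" if "directly_finite TYPE('a)"
    "b * a * b = b \<and> s (a * b) = a * b \<and> b * a ^ 2 = a" for a b
    using step1[OF that(1) assms] that(2) by blast
next
  fix a b :: 'a
  assume H: "\<forall>a b::'a. b * a * b = b \<and> s (a * b) = a * b \<and> b * a ^ 2 = a \<longrightarrow> core_inverse s a b"
    and h: "a * b * a = a \<and> s (a * b) = a * b \<and> b * a ^ 2 = a"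
  have h1: "a * b * a = a" and h2: "s (a * b) = a * b" and h3: "b * a ^ 2 = a" using h by auto
  have "a * (b * a * b) = (a * b * a) * b" by (simp add: mult.assoc)
  hence ab: "a * (b * a * b) = a * b" using h1 by simp
  have "b * a * b * a * (b * a * b) = b * ((a * b * a) * b * a) * b" by (simp add: mult.assoc)
  also have "... = b * (a * b * a) * b" using h1 by simp
  also have "... = b * a * b" using h1 by simp
  finally have 1: "b * a * b * a * (b * a * b) = b * a * b" .
  have 2: "s (a * (b * a * b)) = a * (b * a * b)" using ab h2 by simp
  have "b * a * b * a ^ 2 = b * (a * b * a) * a" by (simp add: mult.assoc power2_eq_square)
  also have "... = b * a ^ 2" using h1 by (simp add: mult.assoc power2_eq_square)
  finally have 3: "b * a * b * a ^ 2 = a" using h3 by simp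
  show "core_inverse s a (b * a * b)" using H 1 2 3 by blast
next
  fix a :: 'a
  assume H: "\<forall>a b::'a. a * b * a = a \<and> s (a * b) = a * b \<and> b * a ^ 2 = a \<longrightarrow> core_inverse s a (b * a * b)"
    and h: "s a * a = 1"
  have q1: "a * s a * a = a" using h by (simp add: mult.assoc)
  have si: "\<And>x y. s (x * y) = s y * s x" and ss: "\<And>x. s (s x) = x"
    using assms unfolding is_involution_def by blast+
  have q2: "s (a * s a) = a * s a" using si ss by simp
  have q3: "s a * a ^ 2 = a" using h by (simp add: mult.assoc[symmetric] power2_eq_square)
  have "s a * a * s a = s a" using h by simp
  hence c': "core_inverse s a (s a)" using H q1 q2 q3 by metis
  hence "s a \<in> {s a * r | r. True}" by (metis (mono_tags, lifting) mem_Collect_eq mult_1_right)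
  moreover have "{s a * r | r. True} = {a * r | r. True}" using c' unfolding core_inverse_def by blast
  ultimately have "s a \<in> {a * r | r. True}" by (simp only:)
  then obtain u where u: "s a = a * u" by blast
  have "s a * s a = (s a * a) * u" using u by (simp add: mult.assoc)
  hence uu: "u = s a * s a" using h by simp
  have sa: "s a = a * s a * s a" using u uu by (simp add: mult.assoc)
  have "s a * a = (a * s a * s a) * a" by (subst sa[symmetric]) (rule refl)
  hence "s a * a = a * s a * (s a * a)" by (simp only: mult.assoc)
  thus "a * s a = 1" using h by simp
qed

end
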